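(* Assume the standing assumptions and Assumption (T). Let $\bar u\in V$, $\epsilon>0$, and let $u_\epsilon\in V$ satisfy \[ \alpha\langle u_\epsilon,v\rangle_V+\beta G_\epsilon'(u_\epsilon)v+\langle u_\epsilon-\bar u,v\rangle_{L^2(\Omega)}=-F'(u_\epsilon)v\qquad\forall v\in V, \] where $F'(u_\epsilon)$ is represented by a function in $L^1(\Omega)$, i.e. $F'(u_\epsilon)v=\int_\Omega F'(u_\epsilon)\,v\,dx$ for $v\in V\cap L^\infty(\Omega)$. Let $\lambda_\epsilon:=2u_\epsilon\psi_\epsilon'(u_\epsilon^2)$ (the function representing $G_\epsilon'(u_\epsilon)$). Then \[ \beta\|\lambda_\epsilon\|_{L^1(\Omega)}\le\|F'(u_\epsilon)\|_{L^1(\Omega)}+\|\bar u\|_{L^1(\Omega)} . \]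
   Context: Standing assumptions: $\Omega\subset\mathbb R^d$ bounded Lipschitz domain; $V$ real Hilbert space with inner product $\langle\cdot,\cdot\rangle_V$, $V\subset L^2(\Omega)$ with compact and dense embedding; $F:V\to\mathbb R$ weakly lower semicontinuous, bounded below by an affine function, continuously Fréchet differentiable. $\alpha>0$, $\beta>0$, $p\in(0,1)$. For $\epsilon>0$, $\psi_\epsilon(t)=\frac p2\frac{t}{\epsilon^{2-p}}+(1-\frac p2)\epsilon^p$ if $t\in[0,\epsilon^2)$ and $\psi_\epsilon(t)=t^{p/2}$ if $t\ge\epsilon^2$, $\psi_\epsilon'(t)=\frac p2\min(\epsilon^{p-2},t^{(p-2)/2})$; $G_\epsilon(u)=\int_\Omega\psi_\epsilon(|u|^2)dx$, $G_\epsilon'(u)v=\int_\Omega 2u\psi_\epsilon'(u^2)v\,dx$. Assumption (T): (i) for every $u\in V$ the function $v:=\max(-1,\min(u,1))$ belongs to $V$ and satisfies $\langle u,v\rangle_V\ge\|v\|_V^2$; (ii) $C_0(\Omega)\cap V$ is dense in $V$ and in $C_0(\Omega)$ with respect to their norms. *)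

theory Defs
  imports "HOL-Analysis.Analysis"
begin

text \<open>Bounded Lipschitz domain (coordinate-free form): nonempty, open, bounded, connected, and
  near every boundary point x it is, inside a ball around x, exactly the region strictly below
  the graph of a Lipschitz function gamma defined on the hyperplane orthogonal to a unit
  direction e (this is the usual definition up to a rigid change of coordinates).\<close>
definition lipschitz_domain :: "'x::euclidean_space set \<Rightarrow> bool" where
  "lipschitz_domain \<Omega> \<longleftrightarrow> open \<Omega> \<and> bounded \<Omega> \<and> connected \<Omega> \<and> \<Omega> \<noteq> {} \<and>
     (\<forall>x\<in>frontier \<Omega>. \<exists>r>0. \<exists>e::'x. \<exists>\<gamma>::'x \<Rightarrow> real. \<exists>L.
        norm e = 1 \<and> L-lipschitz_on {z. z \<bullet> e = 0} \<gamma> \<and>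
        \<Omega> \<inter> ball x r = {y \<in> ball x r. y \<bullet> e < \<gamma> (y - (y \<bullet> e) *\<^sub>R e)})"

definition L2_on :: "'x::euclidean_space set \<Rightarrow> ('x \<Rightarrow> real) \<Rightarrow> bool" where
  "L2_on \<Omega> f \<longleftrightarrow> f \<in> borel_measurable (lebesgue_on \<Omega>) \<and>
                   integrable (lebesgue_on \<Omega>) (\<lambda>x. (f x)\<^sup>2)"

definition L2_norm_sq :: "'x::euclidean_space set \<Rightarrow> ('x \<Rightarrow> real) \<Rightarrow> real" where
  "L2_norm_sq \<Omega> f = (LINT x|lebesgue_on \<Omega>. (f x)\<^sup>2)"

text \<open>The Hilbert space V is an abstract real Hilbert space of type 'v (inner product = inner),
  together with the embedding iota: V -> L2(Omega), given on representatives.  The embedding is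
  linear (a.e.), injective (as a map into L2, i.e. modulo null sets), continuous, compact and
  has dense range.\<close>
definition V_embedding ::
    "'x::euclidean_space set \<Rightarrow> ('v::{real_inner,complete_space} \<Rightarrow> 'x \<Rightarrow> real) \<Rightarrow> bool" where
  "V_embedding \<Omega> \<iota> \<longleftrightarrow>
     (\<forall>u. L2_on \<Omega> (\<iota> u)) \<and>
     (\<forall>u w. AE x in lebesgue_on \<Omega>. \<iota> (u + w) x = \<iota> u x + \<iota> w x) \<and>
     (\<forall>a u. AE x in lebesgue_on \<Omega>. \<iota> (a *\<^sub>R u) x = a * \<iota> u x) \<and>
     (\<forall>u. (AE x in lebesgue_on \<Omega>. \<iota> u x = 0) \<longrightarrow> u = 0) \<and>
     (\<exists>C. \<forall>u. L2_norm_sq \<Omega> (\<iota> u) \<le> C * (norm u)\<^sup>2) \<and>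
     (\<forall>s::nat \<Rightarrow> 'v. bounded (range s) \<longrightarrow>
        (\<exists>r f. strict_mono r \<and> L2_on \<Omega> f \<and>
               (\<lambda>n. L2_norm_sq \<Omega> (\<lambda>x. \<iota> (s (r n)) x - f x)) \<longlonglongrightarrow> 0)) \<and>
     (\<forall>f. L2_on \<Omega> f \<longrightarrow> (\<forall>e>0. \<exists>v. L2_norm_sq \<Omega> (\<lambda>x. \<iota> v x - f x) < e))"

definition weakly_lsc :: "('v::real_inner \<Rightarrow> real) \<Rightarrow> bool" where
  "weakly_lsc F \<longleftrightarrow>
     (\<forall>s u. (\<forall>w. (\<lambda>n. inner (s n) w) \<longlonglongrightarrow> inner u w) \<longrightarrow>
            ereal (F u) \<le> liminf (\<lambda>n. ereal (F (s n))))"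

definition bounded_below_affine :: "('v::real_inner \<Rightarrow> real) \<Rightarrow> bool" where
  "bounded_below_affine F \<longleftrightarrow> (\<exists>w c. \<forall>u. inner w u + c \<le> F u)"

definition C1_with_deriv :: "('v::real_normed_vector \<Rightarrow> real) \<Rightarrow> ('v \<Rightarrow> 'v \<Rightarrow>\<^sub>L real) \<Rightarrow> bool" where
  "C1_with_deriv F DF \<longleftrightarrow> (\<forall>u. (F has_derivative blinfun_apply (DF u)) (at u)) \<and> continuous_on UNIV DF"

definition C0_on :: "'x::euclidean_space set \<Rightarrow> ('x \<Rightarrow> real) set" where
  "C0_on \<Omega> = {f. continuous_on (closure \<Omega>) f \<and> (\<forall>x\<in>frontier \<Omega>. f x = 0)}"

definition assumption_T ::
    "'x::euclidean_space set \<Rightarrow> ('v::{real_inner,complete_space} \<Rightarrow> 'x \<Rightarrow> real) \<Rightarrow> bool" where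
  "assumption_T \<Omega> \<iota> \<longleftrightarrow>
     (\<forall>u. \<exists>v. (AE x in lebesgue_on \<Omega>. \<iota> v x = max (-1) (min (\<iota> u x) 1)) \<and>
              (norm v)\<^sup>2 \<le> inner u v) \<and>
     (\<forall>u. \<forall>e>0. \<exists>v g. g \<in> C0_on \<Omega> \<and> (AE x in lebesgue_on \<Omega>. \<iota> v x = g x) \<and>
                      norm (u - v) < e) \<and>
     (\<forall>f\<in>C0_on \<Omega>. \<forall>e>0. \<exists>v g. g \<in> C0_on \<Omega> \<and> (AE x in lebesgue_on \<Omega>. \<iota> v x = g x) \<and>
                      (\<forall>x\<in>closure \<Omega>. \<bar>f x - g x\<bar> \<le> e))"

definition psi_eps :: "real \<Rightarrow> real \<Rightarrow> real \<Rightarrow> real" where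
  "psi_eps p \<epsilon> t = (if t < \<epsilon>\<^sup>2 then p / 2 * t / \<epsilon> powr (2 - p) + (1 - p / 2) * \<epsilon> powr p
                     else t powr (p / 2))"

text \<open>psi_eps' (t) = p/2 * min(eps^(p-2), t^((p-2)/2)); written piecewise so that the value
  at t = 0 is the intended eps^(p-2) (note 0 powr negative = 0 in Isabelle).\<close>
definition dpsi_eps :: "real \<Rightarrow> real \<Rightarrow> real \<Rightarrow> real" where
  "dpsi_eps p \<epsilon> t = (if t < \<epsilon>\<^sup>2 then p / 2 * \<epsilon> powr (p - 2) else p / 2 * t powr ((p - 2) / 2))"

definition G_eps :: "'x::euclidean_space set \<Rightarrow> real \<Rightarrow> real \<Rightarrow> ('x \<Rightarrow> real) \<Rightarrow> real" where
  "G_eps \<Omega> p \<epsilon> u = (LINT x|lebesgue_on \<Omega>. psi_eps p \<epsilon> ((u x)\<^sup>2))"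

definition lambda_eps :: "real \<Rightarrow> real \<Rightarrow> ('x \<Rightarrow> real) \<Rightarrow> 'x \<Rightarrow> real" where
  "lambda_eps p \<epsilon> u x = 2 * u x * dpsi_eps p \<epsilon> ((u x)\<^sup>2)"

definition dG_eps :: "'x::euclidean_space set \<Rightarrow> real \<Rightarrow> real \<Rightarrow> ('x \<Rightarrow> real) \<Rightarrow> ('x \<Rightarrow> real) \<Rightarrow> real" where
  "dG_eps \<Omega> p \<epsilon> u v = (LINT x|lebesgue_on \<Omega>. lambda_eps p \<epsilon> u x * v x)"

end

theory Submission
  imports Defs
begin

lemma sq_bound: "\<bar>a\<bar> \<le> 1 + a\<^sup>2" for a::real
proof (cases "\<bar>a\<bar> \<le> 1")
  case False
  then have "\<bar>a\<bar> * 1 \<le> \<bar>a\<bar> * \<bar>a\<bar>" by (intro mult_left_mono) auto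
  then show ?thesis by (simp add: power2_eq_square)
next case True then show ?thesis by (smt (verit) zero_le_power2)
qed

lemma abs_mul_le1: "\<bar>b\<bar> \<le> 1 \<Longrightarrow> \<bar>a * b\<bar> \<le> \<bar>a::real\<bar>"
  by (simp add: abs_mult mult_left_le)

lemma abs_diff_mul_le1: "\<bar>b\<bar> \<le> 1 \<Longrightarrow> \<bar>(a1 - a2) * b\<bar> \<le> \<bar>a1::real\<bar> + \<bar>a2\<bar>"
  by (rule order_trans[OF abs_mul_le1 abs_triangle_ineq4])

lemma neg_mul_le1: "\<bar>b\<bar> \<le> 1 \<Longrightarrow> - (a * b) \<le> \<bar>a::real\<bar>"
  using abs_mul_le1[of b a] by (simp add: abs_le_iff)

lemma clip_sign:
  assumes k: "0 \<le> (k::real)" shows "0 \<le> a * max (-1) (min (k * a) 1)"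
proof (cases "0 \<le> a")
  case True
  then have "0 \<le> k * a" using k by simp
  then show ?thesis using True by (intro mult_nonneg_nonneg) auto
next
  case False
  then have "k * a \<le> 0" using k by (simp add: mult_nonneg_nonpos)
  then show ?thesis using False by (intro mult_nonpos_nonpos) auto
qed

lemma clip_sgn:
  assumes "1 \<le> (k::real) * \<bar>a\<bar>" shows "max (-1) (min (k * a) 1) = sgn a"
proof (cases "0 < a")
  case True then show ?thesis using assms by simp
next
  case False
  show ?thesis
  proof (cases "a = 0")
    case True then show ?thesis using assms by simp
  next
    case F2: False
    then have "a < 0" using False by simp
    then have "k * a = - (k * \<bar>a\<bar>)" by simp
    then show ?thesis using assms \<open>a < 0\<close> by simp
  qed
qed

theorem lemma5p7:
  fixes \<Omega> :: "'x::euclidean_space set"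
    and \<iota> :: "'v::{real_inner,complete_space} \<Rightarrow> 'x \<Rightarrow> real"
    and F :: "'v \<Rightarrow> real" and DF :: "'v \<Rightarrow> 'v \<Rightarrow>\<^sub>L real"
    and \<alpha> \<beta> p \<epsilon> :: real and ubar u\<^sub>\<epsilon> :: 'v and g :: "'x \<Rightarrow> real"
  assumes dom: "lipschitz_domain \<Omega>"
    and emb: "V_embedding \<Omega> \<iota>"
    and F_wlsc: "weakly_lsc F"
    and F_below: "bounded_below_affine F"
    and F_C1: "C1_with_deriv F DF"
    and \<alpha>: "\<alpha> > 0" and \<beta>: "\<beta> > 0" and p: "0 < p" "p < 1"
    and T: "assumption_T \<Omega> \<iota>"
    and \<epsilon>: "\<epsilon> > 0"
    and eq: "\<forall>v. \<alpha> * inner u\<^sub>\<epsilon> v + \<beta> * dG_eps \<Omega> p \<epsilon> (\<iota> u\<^sub>\<epsilon>) (\<iota> v)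
                 + (LINT x|lebesgue_on \<Omega>. (\<iota> u\<^sub>\<epsilon> x - \<iota> ubar x) * \<iota> v x)
               = - blinfun_apply (DF u\<^sub>\<epsilon>) v"
    and g_int: "integrable (lebesgue_on \<Omega>) g"
    and g_rep: "\<forall>v. (\<exists>M. AE x in lebesgue_on \<Omega>. \<bar>\<iota> v x\<bar> \<le> M) \<longrightarrow>
                   blinfun_apply (DF u\<^sub>\<epsilon>) v = (LINT x|lebesgue_on \<Omega>. g x * \<iota> v x)"
  shows "\<beta> * (LINT x|lebesgue_on \<Omega>. \<bar>lambda_eps p \<epsilon> (\<iota> u\<^sub>\<epsilon>) x\<bar>)
           \<le> (LINT x|lebesgue_on \<Omega>. \<bar>g x\<bar>) + (LINT x|lebesgue_on \<Omega>. \<bar>\<iota> ubar x\<bar>)"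
  proof -
  let ?M = "lebesgue_on \<Omega>"
  let ?u = "\<iota> u\<^sub>\<epsilon>"
  let ?l = "lambda_eps p \<epsilon> ?u"
  have "open \<Omega>" "bounded \<Omega>" using dom unfolding lipschitz_domain_def by auto
  then have "\<Omega> \<in> lmeasurable" by (simp add: bounded_set_imp_lmeasurable borel_open)
  then interpret fm: finite_measure ?M by (rule finite_measure_lebesgue_on)
  have L2: "\<And>w. L2_on \<Omega> (\<iota> w)" using emb[unfolded V_embedding_def, THEN conjunct1] by (rule spec)
  have meas: "\<And>w. \<iota> w \<in> borel_measurable ?M" using L2 unfolding L2_on_def by (rule conjunct1)
  have L1: "integrable ?M (\<iota> w)" for w
  proof (rule Bochner_Integration.integrable_bound)
    show "integrable ?M (\<lambda>x. 1 + (\<iota> w x)\<^sup>2)"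
      using L2[of w] unfolding L2_on_def by (intro Bochner_Integration.integrable_add fm.integrable_const) auto
    show "\<iota> w \<in> borel_measurable ?M" by (rule meas)
    show "AE x in ?M. norm (\<iota> w x) \<le> norm (1 + (\<iota> w x)\<^sup>2)"
    proof (rule AE_I2)
      fix x
      have "\<bar>\<iota> w x\<bar> \<le> 1 + (\<iota> w x)\<^sup>2" by (rule sq_bound)
      then show "norm (\<iota> w x) \<le> norm (1 + (\<iota> w x)\<^sup>2)" by simp
    qed
  qed
  define c where "c = p / 2 * \<epsilon> powr (p - 2)"
  have dpsi_bd: "0 \<le> dpsi_eps p \<epsilon> t \<and> dpsi_eps p \<epsilon> t \<le> c" for t
  proof (cases "t < \<epsilon>\<^sup>2")
    case True then show ?thesis using p by (simp add: dpsi_eps_def c_def)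
  next
    case False
    then have "t powr ((p - 2) / 2) \<le> (\<epsilon>\<^sup>2) powr ((p - 2) / 2)"
      using p \<epsilon> by (intro powr_mono2') auto
    also have "(\<epsilon>\<^sup>2) powr ((p - 2) / 2) = \<epsilon> powr (p - 2)"
    proof -
      have "\<epsilon>\<^sup>2 = \<epsilon> powr 2" using \<epsilon> by simp
      then have "(\<epsilon>\<^sup>2) powr ((p - 2) / 2) = \<epsilon> powr (2 * ((p - 2) / 2))" by (simp only: powr_powr)
      moreover have "2 * ((p - 2) / 2) = p - 2" by simp
      ultimately show ?thesis by (simp only:)
    qed
    finally show ?thesis using False p by (simp add: dpsi_eps_def c_def)
  qed
  have lmeas: "?l \<in> borel_measurable ?M"
    unfolding lambda_eps_def dpsi_eps_def using meas[of u\<^sub>\<epsilon>] by measurable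
  have lint: "integrable ?M ?l"
  proof (rule Bochner_Integration.integrable_bound)
    show "integrable ?M (\<lambda>x. 2 * c * \<iota> u\<^sub>\<epsilon> x)" using L1 by auto
    show "?l \<in> borel_measurable ?M" by (rule lmeas)
    show "AE x in ?M. norm (?l x) \<le> norm (2 * c * \<iota> u\<^sub>\<epsilon> x)"
    proof (rule AE_I2)
      fix x
      have "c \<ge> 0" using dpsi_bd by (meson order_trans)
      then show "norm (?l x) \<le> norm (2 * c * \<iota> u\<^sub>\<epsilon> x)"
        using dpsi_bd[of "(?u x)\<^sup>2"]
        by (simp add: lambda_eps_def abs_mult) (metis abs_ge_zero mult.commute mult_left_mono)
    qed
  qed
  define clip where "clip n x = max (-1) (min (real (Suc n) * ?u x) 1)" for n x
  have "\<exists>v. (AE x in ?M. \<iota> v x = clip n x) \<and> 0 \<le> inner u\<^sub>\<epsilon> v" for n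
  proof -
    obtain v where v1: "AE x in ?M. \<iota> v x = max (-1) (min (\<iota> (real (Suc n) *\<^sub>R u\<^sub>\<epsilon>) x) 1)"
      and v2: "(norm v)\<^sup>2 \<le> inner (real (Suc n) *\<^sub>R u\<^sub>\<epsilon>) v"
      using T[unfolded assumption_T_def, THEN conjunct1, rule_format, of "real (Suc n) *\<^sub>R u\<^sub>\<epsilon>"] by blast
    have sc: "AE x in ?M. \<iota> (real (Suc n) *\<^sub>R u\<^sub>\<epsilon>) x = real (Suc n) * ?u x"
      using emb[unfolded V_embedding_def, THEN conjunct2, THEN conjunct2, THEN conjunct1] by blast
    have "AE x in ?M. \<iota> v x = clip n x" using v1 sc by eventually_elim (simp add: clip_def)
    moreover have "0 \<le> real (Suc n) * inner u\<^sub>\<epsilon> v" using v2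
      by (metis inner_scaleR_left order_trans zero_le_power2)
    then have "0 \<le> inner u\<^sub>\<epsilon> v" by (simp add: zero_le_mult_iff)
    ultimately show ?thesis by blast
  qed
  then obtain V where V1: "\<And>n. AE x in ?M. \<iota> (V n) x = clip n x"
    and V2: "\<And>n. 0 \<le> inner u\<^sub>\<epsilon> (V n)" by metis
  have bnd: "AE x in ?M. \<bar>\<iota> (V n) x\<bar> \<le> 1" for n
    using V1[of n] by (rule eventually_mono) (auto simp: clip_def abs_le_iff)
  have step: "\<beta> * (LINT x|?M. ?l x * \<iota> (V n) x)
      \<le> (LINT x|?M. \<bar>g x\<bar>) + (LINT x|?M. \<bar>\<iota> ubar x\<bar>)" for n
  proof -
    let ?w = "\<iota> (V n)"
    have e: "\<alpha> * inner u\<^sub>\<epsilon> (V n) + \<beta> * (LINT x|?M. ?l x * ?w x)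
         + (LINT x|?M. (?u x - \<iota> ubar x) * ?w x) = - (LINT x|?M. g x * ?w x)"
      using eq[rule_format, of "V n"] g_rep[rule_format, of "V n"] bnd[of n]
      unfolding dG_eps_def by auto
    have gm: "g \<in> borel_measurable ?M" using g_int by auto
    have i1: "integrable ?M (\<lambda>x. g x * ?w x)"
      by (rule Bochner_Integration.integrable_bound[of _ "\<lambda>x. \<bar>g x\<bar>"])
         (use g_int gm meas bnd[of n] in \<open>auto elim!: eventually_mono simp: abs_mult intro: mult_left_le\<close>)
    have i2: "integrable ?M (\<lambda>x. (?u x - \<iota> ubar x) * ?w x)"
      by (rule Bochner_Integration.integrable_bound[of _ "\<lambda>x. \<bar>?u x\<bar> + \<bar>\<iota> ubar x\<bar>"])
         (use L1 meas bnd[of n] in \<open>auto elim!: eventually_mono intro: abs_diff_mul_le1\<close>)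
    have "- (LINT x|?M. g x * ?w x) \<le> (LINT x|?M. \<bar>g x\<bar>)"
    proof -
      have "(LINT x|?M. - (g x * ?w x)) \<le> (LINT x|?M. \<bar>g x\<bar>)"
        by (rule integral_mono_AE) (use i1 g_int bnd[of n] in \<open>auto elim!: eventually_mono intro: neg_mul_le1\<close>)
      then show ?thesis by simp
    qed
    moreover have "- (LINT x|?M. (?u x - \<iota> ubar x) * ?w x) \<le> (LINT x|?M. \<bar>\<iota> ubar x\<bar>)"
    proof -
      have "(LINT x|?M. - ((?u x - \<iota> ubar x) * ?w x)) \<le> (LINT x|?M. \<bar>\<iota> ubar x\<bar>)"
      proof (rule integral_mono_AE)
        show "integrable ?M (\<lambda>x. - ((?u x - \<iota> ubar x) * ?w x))" using i2 by auto
        show "integrable ?M (\<lambda>x. \<bar>\<iota> ubar x\<bar>)" using L1 by auto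
        show "AE x in ?M. - ((?u x - \<iota> ubar x) * ?w x) \<le> \<bar>\<iota> ubar x\<bar>"
          using V1[of n] bnd[of n]
        proof eventually_elim
          case (elim x)
          have "0 \<le> ?u x * clip n x"
            unfolding clip_def by (rule clip_sign) simp
          moreover have "\<iota> ubar x * ?w x \<le> \<bar>\<iota> ubar x\<bar>"
            using elim(2) by (metis abs_ge_self abs_mult mult_left_le abs_ge_zero order_trans)
          ultimately show ?case using elim(1) by (simp add: algebra_simps)
        qed
      qed
      then show ?thesis by simp
    qed
    ultimately show ?thesis using e V2[of n] \<alpha> by (smt (verit) mult_nonneg_nonneg)
  qed
  have conv: "(\<lambda>n. LINT x|?M. ?l x * \<iota> (V n) x) \<longlonglongrightarrow> (LINT x|?M. \<bar>?l x\<bar>)"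
  proof (rule integral_dominated_convergence[where w="\<lambda>x. \<bar>?l x\<bar>"])
    show "(\<lambda>x. \<bar>?l x\<bar>) \<in> borel_measurable ?M" using lmeas by measurable
    show "(\<lambda>x. ?l x * \<iota> (V n) x) \<in> borel_measurable ?M" for n using lmeas meas by measurable
    show "integrable ?M (\<lambda>x. \<bar>?l x\<bar>)" using lint by auto
    show "AE x in ?M. norm (?l x * \<iota> (V n) x) \<le> \<bar>?l x\<bar>" for n
      using bnd[of n] by (auto elim!: eventually_mono simp: abs_mult intro: mult_left_le)
    have "AE x in ?M. \<forall>n. \<iota> (V n) x = clip n x" using V1 by (simp add: AE_all_countable)
    then show "AE x in ?M. (\<lambda>n. ?l x * \<iota> (V n) x) \<longlonglongrightarrow> \<bar>?l x\<bar>"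
    proof eventually_elim
      case (elim x)
      show ?case
      proof (cases "?u x = 0")
        case True then show ?thesis by (simp add: lambda_eps_def)
      next
        case False
        obtain N where N: "1 \<le> real N * \<bar>?u x\<bar>"
          using ex_less_of_nat_mult[of "\<bar>?u x\<bar>" 1] False
          by (auto intro: less_imp_le)
        have "?l x * \<iota> (V n) x = \<bar>?l x\<bar>" if "n \<ge> N" for n
        proof -
          have "real N \<le> real (Suc n)" using that by simp
          then have "1 \<le> real (Suc n) * \<bar>?u x\<bar>"
            using N by (meson abs_ge_zero mult_right_mono order_trans)
          then have "clip n x = sgn (?u x)"
            unfolding clip_def by (rule clip_sgn)
          moreover have "0 \<le> dpsi_eps p \<epsilon> ((?u x)\<^sup>2)" using dpsi_bd by blast
          ultimately show ?thesis using elim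
            by (auto simp: lambda_eps_def abs_mult sgn_if)
        qed
        then show ?thesis by (intro tendsto_eventually) (auto simp: eventually_sequentially)
      qed
    qed
  qed
  have "(\<lambda>n. \<beta> * (LINT x|?M. ?l x * \<iota> (V n) x)) \<longlonglongrightarrow> \<beta> * (LINT x|?M. \<bar>?l x\<bar>)"
    by (intro tendsto_mult_left conv)
  then show ?thesis using step by (intro LIMSEQ_le_const2) auto
qed

end
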